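(* Let $n\ge1$, $s\in(0,1)$, let $\Omega\subset\mathbb{R}^n$ be open, bounded, with Lipschitz boundary, and let $K:\mathbb{R}^n\times\mathbb{R}^n\to[0,+\infty]$ be measurable with $K(x,z)\ge \frac{c\,\chi_{[0,\varrho)}(|x-z|)}{|x-z|^{n+2s}}$ for all $x,z$, for some $c\in(0,+\infty)$ and $\varrho\in(0,+\infty]$. Then there exists $C_\star>0$, depending only on $n,s,c,\varrho,\Omega$, such that for every measurable $u:\mathbb{R}^n\to\mathbb{R}$ with $u=0$ in $\mathbb{R}^n\setminus\Omega$, $$\iint_{\mathbb{R}^n\times\mathbb{R}^n}\frac{|u(x)-u(z)|^2}{|x-z|^{n+2s}}\,dx\,dz\le C_\star\iint_{\mathbb{R}^n\times\mathbb{R}^n}|u(x)-u(z)|^2K(x,z)\,dx\,dz .$$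
   Context: $\chi_{[0,\varrho)}$ denotes the indicator function of $[0,\varrho)$. *)

theory Defs
  imports "HOL-Analysis.Analysis"
begin

text \<open>Lipschitz boundary (standard definition, up to a rigid motion): every boundary
point p has a ball around it in which, for some unit direction e, the set is the
strict supergraph (in direction e) of a Lipschitz function g defined on the
hyperplane orthogonal to e.\<close>
definition lipschitz_boundary :: "'a::euclidean_space set \<Rightarrow> bool" where
  "lipschitz_boundary \<Omega> \<longleftrightarrow>
     (\<forall>p \<in> frontier \<Omega>. \<exists>r>0. \<exists>e. norm e = 1 \<and>
        (\<exists>(g::'a \<Rightarrow> real) L. L-lipschitz_on {y. y \<bullet> e = 0} g \<and>
           \<Omega> \<inter> ball p r = {x \<in> ball p r. g (x - (x \<bullet> e) *\<^sub>R e) < x \<bullet> e}))"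

end

theory Submission
  imports Defs
begin

lemma nn_integral_translate:
  fixes f :: "'a::euclidean_space \<Rightarrow> ennreal"
  assumes "f \<in> borel_measurable lborel"
  shows "(\<integral>\<^sup>+x. f (c + x) \<partial>lborel) = (\<integral>\<^sup>+x. f x \<partial>lborel)"
proof -
  have "(\<integral>\<^sup>+x. f x \<partial>lborel) = (\<integral>\<^sup>+x. f x \<partial>distr lborel borel ((+) c))"
    by (simp add: lborel_distr_plus)
  also have "\<dots> = (\<integral>\<^sup>+x. f (c + x) \<partial>lborel)"
    using assms by (subst nn_integral_distr) auto
  finally show ?thesis by simp
qed

lemma tail_finite:
  fixes a r :: real
  assumes r: "r > 0" and a: "real DIM('a) < a"
  shows "(\<integral>\<^sup>+w. ennreal (if r \<le> norm w then 1 / norm w powr a else 0) \<partial>(lborel::'a::euclidean_space measure)) < \<infinity>"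
proof -
  define n where "n = DIM('a)"
  define V where "V = unit_ball_vol (real n)"
  define q where "q = (2::real) powr (real n - a)"
  define A where "A = V * 2 ^ n * r powr (real n - a)"
  define g where "g = (\<lambda>j::nat. \<lambda>w::'a. ennreal ((2^j * r) powr (-a)) * indicator (ball 0 (2^(Suc j) * r)) w)"
  have V: "V > 0" unfolding V_def by simp
  have q: "0 < q" "q < 1" unfolding q_def using a n_def by (auto intro!: powr_less_one)
  have pt: "ennreal (if r \<le> norm w then 1 / norm w powr a else 0) \<le> (\<Sum>j. g j w)" for w
  proof (cases "r \<le> norm w")
    case True
    have ex: "\<exists>m. norm w < 2^m * r"
    proof -
      obtain m where "norm w / r < 2^m" using real_arch_pow[of 2 "norm w / r"] by auto
      then show ?thesis using r by (auto simp: field_simps)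
    qed
    define m where "m = (LEAST m. norm w < 2^m * r)"
    have m1: "norm w < 2^m * r" unfolding m_def by (rule LeastI_ex[OF ex])
    have "m \<noteq> 0"
    proof
      assume "m = 0" with m1 True show False by simp
    qed
    then obtain j where mj: "m = Suc j" by (cases m) auto
    have "\<not> norm w < 2^j * r"
      using not_less_Least[of j "\<lambda>m. norm w < 2^m * r"] mj unfolding m_def by simp
    then have j1: "2^j * r \<le> norm w" by simp
    have "a \<ge> 0" using a by (smt (verit) of_nat_0_le_iff)
    have "norm w powr (-a) \<le> (2^j * r) powr (-a)"
      by (rule powr_mono2') (use j1 r \<open>a \<ge> 0\<close> in auto)
    then have le: "1 / norm w powr a \<le> (2^j * r) powr (-a)" by (simp only: powr_minus_divide)
    have "w \<in> ball 0 (2^(Suc j) * r)" using m1 mj by simp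
    then have gj: "g j w = ennreal ((2^j * r) powr (-a))" unfolding g_def by simp
    have "ennreal (if r \<le> norm w then 1 / norm w powr a else 0) \<le> g j w"
      unfolding gj using True le by (simp add: ennreal_leI)
    also have "g j w \<le> (\<Sum>j. g j w)"
      using sum_le_suminf[of "\<lambda>j. g j w" "{j}"] by (simp add: summableI)
    finally show ?thesis .
  qed simp
  have "(\<integral>\<^sup>+w. ennreal (if r \<le> norm w then 1 / norm w powr a else 0) \<partial>(lborel::'a measure))
      \<le> (\<integral>\<^sup>+w. (\<Sum>j. g j w) \<partial>lborel)"
    by (intro nn_integral_mono pt)
  also have "\<dots> = (\<Sum>j. \<integral>\<^sup>+w. g j w \<partial>lborel)"
  proof (rule nn_integral_suminf)
    fix j
    have B: "ball (0::'a) (2^Suc j * r) \<in> sets lborel" by simp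
    show "g j \<in> borel_measurable lborel"
      unfolding g_def by (intro borel_measurable_times_ennreal borel_measurable_const borel_measurable_indicator B)
  qed
  also have "\<dots> = (\<Sum>j. ennreal (A * q^j))"
  proof (intro suminf_cong)
    fix j :: nat
    have "(\<integral>\<^sup>+w. g j w \<partial>lborel) = ennreal ((2^j * r) powr (-a)) * emeasure lborel (ball (0::'a) (2^(Suc j) * r))"
      unfolding g_def by (simp add: nn_integral_cmult_indicator)
    also have "\<dots> = ennreal ((2^j * r) powr (-a) * (V * (2^(Suc j) * r) ^ n))"
    proof -
      have "emeasure lborel (ball (0::'a) (2^(Suc j) * r)) = ennreal (V * (2^(Suc j) * r) ^ n)"
        unfolding V_def n_def by (rule emeasure_ball) (use r in simp)
      then show ?thesis using r V by (simp add: ennreal_mult)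
    qed
    also have "(2^j * r) powr (-a) * (V * (2^(Suc j) * r) ^ n) = A * q^j"
    proof -
      define X where "X = (2^j * r :: real)"
      have X: "X > 0" using r unfolding X_def by simp
      have "(2^(Suc j) * r) ^ n = (2 * X) ^ n" unfolding X_def by (simp add: mult.assoc)
      also have "\<dots> = 2^n * X powr real n" using X by (simp add: powr_realpow power_mult_distrib)
      finally have 1: "(2^(Suc j) * r) ^ n = 2^n * X powr real n" .
      have 2: "X powr (-a) * X powr real n = X powr (real n - a)"
        by (simp add: powr_add[symmetric])
      have 3: "((2::real) powr (real n - a)) ^ j = 2 powr (real j * (real n - a))"
        by (rule powr_power) simp
      have 4: "X powr (real n - a) = (2 powr (real j * (real n - a))) * r powr (real n - a)"
        unfolding X_def powr_mult
        by (simp add: powr_realpow[symmetric] powr_powr)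
      have "(2^j * r) powr (-a) * (V * (2^(Suc j) * r) ^ n) = V * 2^n * (X powr (-a) * X powr real n)"
        unfolding X_def[symmetric] 1 by (simp only: mult_ac)
      also have "\<dots> = V * 2^n * (2 powr (real j * (real n - a)) * r powr (real n - a))"
        unfolding 2 4 ..
      also have "\<dots> = V * 2 ^ n * r powr (real n - a) * ((2::real) powr (real n - a))^j"
        unfolding 3 by (simp only: mult_ac)
      finally show ?thesis unfolding A_def q_def .
    qed
    finally show "(\<integral>\<^sup>+w. g j w \<partial>lborel) = ennreal (A * q^j)" .
  qed
  also have "\<dots> = ennreal (\<Sum>j. A * q^j)"
    using q V r unfolding A_def
    by (intro suminf_ennreal2) (auto intro!: summable_mult summable_geometric)
  also have "\<dots> < \<infinity>" by simp
  finally show ?thesis .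
qed


lemma poincare:
  fixes R r :: real
  assumes R: "R > 0" and r: "r > 0"
  shows "\<exists>P\<ge>0. \<forall>u::'a::euclidean_space \<Rightarrow> real. u \<in> borel_measurable lborel \<longrightarrow>
     (\<forall>x. R \<le> norm x \<longrightarrow> u x = 0) \<longrightarrow>
     (\<integral>\<^sup>+x. ennreal ((u x)\<^sup>2) \<partial>lborel) \<le> ennreal P *
       (\<integral>\<^sup>+p. ennreal (if dist (fst p) (snd p) < r \<and> 0 < dist (fst p) (snd p) then (u (fst p) - u (snd p))\<^sup>2 else 0)
         \<partial>(lborel \<Otimes>\<^sub>M lborel))"
proof -
  obtain b :: 'a where b: "b \<in> Basis" using nonempty_Basis by blast
  define h0 where "h0 = (3 * r / 4) *\<^sub>R b"
  define H where "H = ball h0 (r/4)"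
  define m where "m = measure lborel H"
  have m: "m > 0" unfolding m_def H_def using r by (simp add: content_ball_pos)
  have mH: "emeasure lborel H = ennreal m"
    unfolding m_def H_def
    by (rule emeasure_eq_ennreal_measure) (metis emeasure_lborel_ball_finite infinity_ennreal_def less_irrefl)
  define k :: nat where "k = nat \<lceil>4 * R / r\<rceil>"
  have k: "4 * R / r \<le> real k" unfolding k_def by linarith
  have hH: "r / 2 < norm h \<and> norm h < r" if "h \<in> H" for h
  proof -
    have n0: "norm h0 = 3 * r / 4" unfolding h0_def using b r by simp
    have "dist h0 h < r / 4" using that unfolding H_def by simp
    then have "norm (h0 - h) < r/4" by (simp add: dist_norm)
    moreover have "norm h0 \<le> norm h + norm (h0 - h)" and "norm h \<le> norm h0 + norm (h0 - h)"
      using norm_triangle_ineq[of h "h0 - h"] norm_triangle_ineq[of h0 "h - h0"]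
      by (simp_all add: norm_minus_commute)
    ultimately show ?thesis using n0 by linarith
  qed
  define P where "P = real k * real k / m"
  show ?thesis
  proof (intro exI[of _ P] conjI allI impI)
    show "0 \<le> P" unfolding P_def using m by simp
    fix u :: "'a \<Rightarrow> real"
    assume um: "u \<in> borel_measurable lborel" and u0: "\<forall>x. R \<le> norm x \<longrightarrow> u x = 0"
    have [measurable]: "u \<in> borel_measurable borel" using um by simp
    have [measurable]: "H \<in> sets borel" unfolding H_def by simp
    have MF: "(\<lambda>p. indicator H (fst p) * ennreal ((u (snd p) - u (snd p + fst p))\<^sup>2)) \<in> borel_measurable (lborel \<Otimes>\<^sub>M lborel)"
      by measurable
    have MJ: "(\<lambda>p. ennreal (if dist (fst p) (snd p) < r \<and> 0 < dist (fst p) (snd p) then (u (fst p) - u (snd p))\<^sup>2 else 0)) \<in> borel_measurable (lborel \<Otimes>\<^sub>M lborel)"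
      by measurable
    define D where "D = (\<lambda>h. \<integral>\<^sup>+y. ennreal ((u y - u (y + h))\<^sup>2) \<partial>lborel)"
    define I where "I = (\<integral>\<^sup>+x. ennreal ((u x)\<^sup>2) \<partial>lborel)"
    define J where "J = (\<integral>\<^sup>+p. ennreal (if dist (fst p) (snd p) < r \<and> 0 < dist (fst p) (snd p) then (u (fst p) - u (snd p))\<^sup>2 else 0)
         \<partial>(lborel \<Otimes>\<^sub>M lborel))"
    have C1: "(u x)\<^sup>2 \<le> real k * (\<Sum>j<k. (u (x + real j *\<^sub>R h) - u (x + real (Suc j) *\<^sub>R h))\<^sup>2)"
      if h: "h \<in> H" for x h
    proof (cases "R \<le> norm x")
      case True
      then show ?thesis using u0 by (simp add: sum_nonneg)
    next
      case False
      have nh: "r / 2 < norm h" using hH[OF h] by simp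
      have "real k * (r/2) \<ge> 2 * R" using k r by (simp add: field_simps)
      then have "norm (real k *\<^sub>R h) \<ge> 2 * R"
      proof -
        have "real k * (r/2) \<le> real k * norm h" by (rule mult_left_mono) (use nh in auto)
        moreover have "norm (real k *\<^sub>R h) = real k * norm h" by simp
        ultimately show ?thesis using \<open>real k * (r/2) \<ge> 2 * R\<close> by linarith
      qed
      moreover have "norm (real k *\<^sub>R h) \<le> norm (x + real k *\<^sub>R h) + norm x"
        using norm_triangle_ineq4[of "x + real k *\<^sub>R h" x] by simp
      ultimately have "R \<le> norm (x + real k *\<^sub>R h)" using False by linarith
      then have uk: "u (x + real k *\<^sub>R h) = 0" using u0 by blast
      have "(\<Sum>j<k. (u (x + real j *\<^sub>R h) - u (x + real (Suc j) *\<^sub>R h))) = u x"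
        using sum_lessThan_telescope'[of "\<lambda>j. u (x + real j *\<^sub>R h)" k] uk by simp
      then have "(u x)\<^sup>2 = (\<Sum>j<k. (u (x + real j *\<^sub>R h) - u (x + real (Suc j) *\<^sub>R h)))\<^sup>2" by simp
      also have "\<dots> \<le> (\<Sum>j<k. (u (x + real j *\<^sub>R h) - u (x + real (Suc j) *\<^sub>R h))\<^sup>2) * card {..<k}"
        by (rule sum_squared_le_sum_of_squares)
      finally show ?thesis by (simp add: mult.commute)
    qed
    have C2: "I \<le> ennreal (real k * real k) * D h" if h: "h \<in> H" for h
    proof -
      have "I \<le> (\<integral>\<^sup>+x. ennreal (real k * (\<Sum>j<k. (u (x + real j *\<^sub>R h) - u (x + real (Suc j) *\<^sub>R h))\<^sup>2)) \<partial>lborel)"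
        unfolding I_def by (intro nn_integral_mono ennreal_leI C1 h)
      also have "\<dots> = ennreal (real k) * (\<Sum>j<k. \<integral>\<^sup>+x. ennreal ((u (x + real j *\<^sub>R h) - u (x + real (Suc j) *\<^sub>R h))\<^sup>2) \<partial>lborel)"
      proof -
        have Mj: "(\<lambda>x. ennreal ((u (x + a) - u (x + b))\<^sup>2)) \<in> borel_measurable lborel" for a b
          by measurable
        have "(\<lambda>x. ennreal (real k * (\<Sum>j<k. (u (x + real j *\<^sub>R h) - u (x + real (Suc j) *\<^sub>R h))\<^sup>2)))
           = (\<lambda>x. ennreal (real k) * (\<Sum>j<k. ennreal ((u (x + real j *\<^sub>R h) - u (x + real (Suc j) *\<^sub>R h))\<^sup>2)))"
          by (rule ext, subst sum_ennreal) (auto simp: ennreal_mult sum_nonneg)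
        moreover have "(\<integral>\<^sup>+x. ennreal (real k) * (\<Sum>j<k. ennreal ((u (x + real j *\<^sub>R h) - u (x + real (Suc j) *\<^sub>R h))\<^sup>2)) \<partial>lborel)
           = ennreal (real k) * (\<integral>\<^sup>+x. (\<Sum>j<k. ennreal ((u (x + real j *\<^sub>R h) - u (x + real (Suc j) *\<^sub>R h))\<^sup>2)) \<partial>lborel)"
          by (rule nn_integral_cmult) (intro borel_measurable_sum Mj)
        moreover have "(\<integral>\<^sup>+x. (\<Sum>j<k. ennreal ((u (x + real j *\<^sub>R h) - u (x + real (Suc j) *\<^sub>R h))\<^sup>2)) \<partial>lborel)
           = (\<Sum>j<k. \<integral>\<^sup>+x. ennreal ((u (x + real j *\<^sub>R h) - u (x + real (Suc j) *\<^sub>R h))\<^sup>2) \<partial>lborel)"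
          by (rule nn_integral_sum) (intro Mj)
        ultimately show ?thesis by simp
      qed
      also have "\<dots> = ennreal (real k) * (\<Sum>j<k. D h)"
      proof -
        have "(\<integral>\<^sup>+x. ennreal ((u (x + real j *\<^sub>R h) - u (x + real (Suc j) *\<^sub>R h))\<^sup>2) \<partial>lborel) = D h" for j
        proof -
          have "(\<integral>\<^sup>+x. ennreal ((u (x + real j *\<^sub>R h) - u (x + real (Suc j) *\<^sub>R h))\<^sup>2) \<partial>lborel)
              = (\<integral>\<^sup>+x. (\<lambda>y. ennreal ((u y - u (y + h))\<^sup>2)) (real j *\<^sub>R h + x) \<partial>lborel)"
          proof -
            have e1: "x + real j *\<^sub>R h = real j *\<^sub>R h + x" for x by (simp add: add.commute)
            have e2: "x + real (Suc j) *\<^sub>R h = real j *\<^sub>R h + x + h" for x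
              by (simp add: scaleR_add_left add_ac)
            show ?thesis by (simp only: e1 e2)
          qed
          also have "\<dots> = D h" unfolding D_def by (rule nn_integral_translate) measurable
          finally show ?thesis .
        qed
        then show ?thesis by simp
      qed
      also have "\<dots> = ennreal (real k * real k) * D h"
        by (simp add: ennreal_mult' ennreal_of_nat_eq_real_of_nat mult.assoc)
      finally show ?thesis .
    qed
    have PT: "indicator H (z - y) * ennreal ((u y - u z)\<^sup>2) \<le> ennreal (if dist y z < r \<and> 0 < dist y z then (u y - u z)\<^sup>2 else 0)" for y z
    proof (cases "z - y \<in> H")
      case True
      then have "r / 2 < norm (z - y) \<and> norm (z - y) < r" by (rule hH)
      then have "dist y z < r \<and> 0 < dist y z" using r by (auto simp: dist_norm norm_minus_commute)
      then show ?thesis using True by simp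
    qed simp
    define K2 where "K2 = ennreal (real k * real k)"
    have Dm: "(\<lambda>y. ennreal ((u y - u (y + h))\<^sup>2)) \<in> borel_measurable lborel" for h
      by measurable
    have MF2: "(\<lambda>p. K2 * (indicator H (fst p) * ennreal ((u (snd p) - u (snd p + fst p))\<^sup>2))) \<in> borel_measurable (lborel \<Otimes>\<^sub>M lborel)"
      by measurable
    have MJ2: "(\<lambda>p. K2 * ennreal (if dist (fst p) (snd p) < r \<and> 0 < dist (fst p) (snd p) then (u (fst p) - u (snd p))\<^sup>2 else 0)) \<in> borel_measurable (lborel \<Otimes>\<^sub>M lborel)"
      by measurable
    have "ennreal m * I = (\<integral>\<^sup>+h. indicator H h * I \<partial>lborel)"
      using mH by (simp add: nn_integral_multc)
    also have "\<dots> \<le> (\<integral>\<^sup>+h. indicator H h * (K2 * D h) \<partial>lborel)"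
      unfolding K2_def by (intro nn_integral_mono) (auto simp: indicator_def C2)
    also have "\<dots> = (\<integral>\<^sup>+h. \<integral>\<^sup>+y. K2 * (indicator H h * ennreal ((u y - u (y + h))\<^sup>2)) \<partial>lborel \<partial>lborel)"
    proof (rule nn_integral_cong)
      fix h :: 'a
      have "indicator H h * (K2 * D h) = (indicator H h * K2) * D h" by (simp add: mult_ac)
      also have "\<dots> = (\<integral>\<^sup>+y. (indicator H h * K2) * ennreal ((u y - u (y + h))\<^sup>2) \<partial>lborel)"
        unfolding D_def by (rule nn_integral_cmult[OF Dm, symmetric])
      finally show "indicator H h * (K2 * D h) = (\<integral>\<^sup>+y. K2 * (indicator H h * ennreal ((u y - u (y + h))\<^sup>2)) \<partial>lborel)"
        by (simp add: mult_ac)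
    qed
    also have "\<dots> = (\<integral>\<^sup>+y. \<integral>\<^sup>+h. K2 * (indicator H h * ennreal ((u y - u (y + h))\<^sup>2)) \<partial>lborel \<partial>lborel)"
      by (rule lborel_pair.Fubini'[symmetric]) (use MF2 in \<open>simp add: case_prod_beta'\<close>)
    also have "\<dots> = (\<integral>\<^sup>+y. \<integral>\<^sup>+z. K2 * (indicator H (z - y) * ennreal ((u y - u z)\<^sup>2)) \<partial>lborel \<partial>lborel)"
    proof (rule nn_integral_cong)
      fix y :: 'a
      have "(\<integral>\<^sup>+h. K2 * (indicator H h * ennreal ((u y - u (y + h))\<^sup>2)) \<partial>lborel)
          = (\<integral>\<^sup>+h. (\<lambda>z. K2 * (indicator H (z - y) * ennreal ((u y - u z)\<^sup>2))) (y + h) \<partial>lborel)"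
        by simp
      also have "\<dots> = (\<integral>\<^sup>+z. K2 * (indicator H (z - y) * ennreal ((u y - u z)\<^sup>2)) \<partial>lborel)"
        by (rule nn_integral_translate) measurable
      finally show "(\<integral>\<^sup>+h. K2 * (indicator H h * ennreal ((u y - u (y + h))\<^sup>2)) \<partial>lborel)
          = (\<integral>\<^sup>+z. K2 * (indicator H (z - y) * ennreal ((u y - u z)\<^sup>2)) \<partial>lborel)" .
    qed
    also have "\<dots> \<le> (\<integral>\<^sup>+y. \<integral>\<^sup>+z. K2 * ennreal (if dist y z < r \<and> 0 < dist y z then (u y - u z)\<^sup>2 else 0) \<partial>lborel \<partial>lborel)"
    by (intro nn_integral_mono mult_left_mono PT) simp
    also have "\<dots> = (\<integral>\<^sup>+p. K2 * ennreal (if dist (fst p) (snd p) < r \<and> 0 < dist (fst p) (snd p) then (u (fst p) - u (snd p))\<^sup>2 else 0) \<partial>(lborel \<Otimes>\<^sub>M lborel))"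
      by (simp only: lborel.nn_integral_fst[symmetric, OF MJ2] fst_conv snd_conv)
    also have "\<dots> = K2 * J"
      unfolding J_def by (rule nn_integral_cmult[OF MJ])
    finally have mI: "ennreal m * I \<le> ennreal (real k * real k) * J" unfolding K2_def .
    have "I = ennreal (1 / m) * (ennreal m * I)"
      using m by (simp add: mult.assoc[symmetric] ennreal_mult'[symmetric])
    also have "\<dots> \<le> ennreal (1 / m) * (ennreal (real k * real k) * J)"
      by (intro mult_left_mono mI) simp
    also have "\<dots> = ennreal P * J"
      using m unfolding P_def by (simp add: mult.assoc[symmetric] ennreal_mult'[symmetric])
    finally show "I \<le> ennreal P * J" .
  qed
qed


lemma ennreal_le_add3: "(a::ennreal) \<le> b \<Longrightarrow> a \<le> b + c + e"
  using add_mono[of a b 0 "c + e"] by (simp add: add.assoc)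

theorem lemma2p1:
  fixes \<Omega> :: "'a::euclidean_space set" and s c :: real and \<rho> :: ereal
  assumes "0 < s" "s < 1"
    and "open \<Omega>" "bounded \<Omega>" "lipschitz_boundary \<Omega>"
    and "0 < c" "0 < \<rho>"
  shows "\<exists>C>0. \<forall>(K::'a \<Rightarrow> 'a \<Rightarrow> ennreal) (u::'a \<Rightarrow> real).
     (\<lambda>p. K (fst p) (snd p)) \<in> borel_measurable (lborel \<Otimes>\<^sub>M lborel) \<longrightarrow>
     (\<forall>x z. x \<noteq> z \<and> ereal (dist x z) < \<rho> \<longrightarrow>
        ennreal (c / dist x z powr (real DIM('a) + 2 * s)) \<le> K x z) \<longrightarrow>
     u \<in> borel_measurable lborel \<longrightarrow>
     (\<forall>x. x \<notin> \<Omega> \<longrightarrow> u x = 0) \<longrightarrow>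
     (\<integral>\<^sup>+ p. ennreal ((u (fst p) - u (snd p))\<^sup>2 / dist (fst p) (snd p) powr (real DIM('a) + 2 * s))
        \<partial>(lborel \<Otimes>\<^sub>M lborel))
     \<le> ennreal C * (\<integral>\<^sup>+ p. ennreal ((u (fst p) - u (snd p))\<^sup>2) * K (fst p) (snd p)
        \<partial>(lborel \<Otimes>\<^sub>M lborel))"
proof -
  note c = \<open>0 < c\<close>
  define a where "a = real DIM('a) + 2 * s"
  have a: "real DIM('a) < a" using \<open>0 < s\<close> unfolding a_def by simp
  have a0: "0 \<le> a" using a by (smt (verit) of_nat_0_le_iff)
  obtain r where r: "0 < r" "ereal r \<le> \<rho>"
  proof (cases \<rho>)
    case (real x)
    then show ?thesis using that \<open>0 < \<rho>\<close> by auto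
  next
    case PInf
    then show ?thesis using that[of 1] by auto
  next
    case MInf
    then show ?thesis using \<open>0 < \<rho>\<close> by auto
  qed
  obtain R where R: "R > 0" "\<Omega> \<subseteq> ball 0 R"
    using bounded_subset_ballD[OF \<open>bounded \<Omega>\<close>, of 0] by blast
  obtain P where P: "P \<ge> 0" and PI: "\<And>u::'a \<Rightarrow> real. u \<in> borel_measurable lborel \<Longrightarrow>
     (\<forall>x. R \<le> norm x \<longrightarrow> u x = 0) \<Longrightarrow>
     (\<integral>\<^sup>+x. ennreal ((u x)\<^sup>2) \<partial>lborel) \<le> ennreal P *
       (\<integral>\<^sup>+p. ennreal (if dist (fst p) (snd p) < r \<and> 0 < dist (fst p) (snd p) then (u (fst p) - u (snd p))\<^sup>2 else 0)
         \<partial>(lborel \<Otimes>\<^sub>M lborel))"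
    using poincare[OF R(1) r(1)] by blast
  define tlf where "tlf = (\<lambda>w::'a. if r \<le> norm w then 1 / norm w powr a else 0)"
  have tlf0: "tlf w \<ge> 0" for w unfolding tlf_def by simp
  define T0 where "T0 = (\<integral>\<^sup>+w. ennreal (tlf w) \<partial>(lborel::'a measure))"
  have "T0 < \<infinity>" unfolding T0_def tlf_def by (rule tail_finite[OF r(1) a])
  then obtain T where T: "T \<ge> 0" "T0 = ennreal T"
    by (metis ennreal_cases infinity_ennreal_def less_irrefl zero_le)
  define C where "C = 1 / c + 4 * T * P * (r powr a / c)"
  have C: "C > 0" unfolding C_def using c T P by (simp add: add_pos_nonneg)
  show ?thesis
    unfolding a_def[symmetric]
  proof (intro exI[of _ C] conjI allI impI C)
    fix K :: "'a \<Rightarrow> 'a \<Rightarrow> ennreal" and u :: "'a \<Rightarrow> real"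
    assume Km[measurable]: "(\<lambda>p. K (fst p) (snd p)) \<in> borel_measurable (lborel \<Otimes>\<^sub>M lborel)"
      and Kb: "\<forall>x z. x \<noteq> z \<and> ereal (dist x z) < \<rho> \<longrightarrow> ennreal (c / dist x z powr a) \<le> K x z"
      and um: "u \<in> borel_measurable lborel"
      and u0: "\<forall>x. x \<notin> \<Omega> \<longrightarrow> u x = 0"
    have [measurable]: "u \<in> borel_measurable borel" using um by simp
    have tlm[measurable]: "tlf \<in> borel_measurable borel" unfolding tlf_def by measurable
    define G where "G = (\<lambda>p. ennreal ((u (fst p) - u (snd p))\<^sup>2) * K (fst p) (snd p))"
    define F where "F = (\<lambda>p. ennreal ((u (fst p) - u (snd p))\<^sup>2 / dist (fst p) (snd p) powr a))"
    define Jf where "Jf = (\<lambda>p. ennreal (if dist (fst p) (snd p) < r \<and> 0 < dist (fst p) (snd p) then (u (fst p) - u (snd p))\<^sup>2 else 0))"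
    define A1 where "A1 = (\<lambda>p. ennreal ((u (fst p))\<^sup>2) * ennreal (tlf (fst p - snd p)))"
    define A2 where "A2 = (\<lambda>p. ennreal ((u (snd p))\<^sup>2) * ennreal (tlf (fst p - snd p)))"
    have Gm: "G \<in> borel_measurable (lborel \<Otimes>\<^sub>M lborel)" unfolding G_def by measurable
    have Fm: "F \<in> borel_measurable (lborel \<Otimes>\<^sub>M lborel)" unfolding F_def by measurable
    have Jm: "Jf \<in> borel_measurable (lborel \<Otimes>\<^sub>M lborel)" unfolding Jf_def by measurable
    have A1m: "A1 \<in> borel_measurable (lborel \<Otimes>\<^sub>M lborel)" unfolding A1_def by measurable
    have A2m: "A2 \<in> borel_measurable (lborel \<Otimes>\<^sub>M lborel)" unfolding A2_def by measurable
    define I where "I = (\<integral>\<^sup>+x. ennreal ((u x)\<^sup>2) \<partial>lborel)"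
    have uR: "\<forall>x. R \<le> norm x \<longrightarrow> u x = 0" using u0 R(2) by (auto simp: subset_iff)
    have PW1: "F p \<le> ennreal (1 / c) * G p + ennreal 2 * A1 p + ennreal 2 * A2 p" for p
    proof -
      obtain x z where p: "p = (x, z)" by (cases p)
      define d where "d = dist x z"
      define D where "D = (u x - u z)\<^sup>2"
      have D0: "D \<ge> 0" unfolding D_def by simp
      have Fp: "F p = ennreal (D / d powr a)" unfolding F_def p d_def D_def by simp
      show ?thesis
      proof (cases "d < r")
        case True
        show ?thesis
        proof (cases "x = z")
          case True
          then have "F p = 0" unfolding Fp D_def by simp
          then show ?thesis by simp
        next
          case False
          then have d0: "0 < d" unfolding d_def by simp
          have "ereal d < \<rho>" 
          proof -
            have "ereal d < ereal r" using \<open>d < r\<close> by simp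
            then show ?thesis using r(2) by (rule less_le_trans)
          qed
          then have Kxz: "ennreal (c / d powr a) \<le> K x z" using Kb[rule_format, of x z] False unfolding d_def by simp
          have "D / d powr a = (1 / c) * (D * (c / d powr a))" using c by (simp add: field_simps)
          moreover have c': "0 \<le> 1 / c" using c by simp
          ultimately have "F p = ennreal (1 / c) * (ennreal D * ennreal (c / d powr a))"
            unfolding Fp by (simp only: ennreal_mult'[OF c'] ennreal_mult'[OF D0])
          also have "\<dots> \<le> ennreal (1 / c) * (ennreal D * K x z)"
            by (intro mult_left_mono Kxz) simp_all
          also have "\<dots> = ennreal (1 / c) * G p" unfolding G_def p D_def by simp
          finally show ?thesis by (rule ennreal_le_add3)
        qed
      next
        case False
        then have rd: "r \<le> d" by simp
        have da: "0 < d powr a" using rd r(1) by simp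
        have t: "tlf (x - z) = 1 / d powr a" unfolding tlf_def d_def using rd by (simp add: dist_norm d_def)
        have "0 \<le> (u x + u z)\<^sup>2" by simp
        then have D2: "D \<le> 2 * (u x)\<^sup>2 + 2 * (u z)\<^sup>2" unfolding D_def power2_diff power2_sum by linarith
        have "D / d powr a \<le> (2 * (u x)\<^sup>2 + 2 * (u z)\<^sup>2) / d powr a"
          by (rule divide_right_mono[OF D2]) (use da in simp)
        also have "\<dots> = 2 * ((u x)\<^sup>2 * tlf (x - z)) + 2 * ((u z)\<^sup>2 * tlf (x - z))"
          unfolding t by (simp add: add_divide_distrib)
        finally have "F p \<le> ennreal (2 * ((u x)\<^sup>2 * tlf (x - z)) + 2 * ((u z)\<^sup>2 * tlf (x - z)))"
          unfolding Fp by (rule ennreal_leI)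
        also have "\<dots> = ennreal 2 * A1 p + ennreal 2 * A2 p"
        proof -
          have f2: "(0::real) \<le> 2" by simp
          have n1: "0 \<le> 2 * ((u x)\<^sup>2 * tlf (x - z))" and n2: "0 \<le> 2 * ((u z)\<^sup>2 * tlf (x - z))"
            using tlf0[of "x - z"] by simp_all
          show ?thesis unfolding A1_def A2_def p fst_conv snd_conv ennreal_plus[OF n1 n2]
              ennreal_mult'[OF f2] ennreal_mult'[OF zero_le_power2] ..
        qed
        finally have "F p \<le> ennreal 2 * A1 p + ennreal 2 * A2 p" .
        then show ?thesis unfolding add.assoc by (rule add_increasing[OF zero_le])
      qed
    qed
    have PW2: "Jf p \<le> ennreal (r powr a / c) * G p" for p
    proof -
      obtain x z where p: "p = (x, z)" by (cases p)
      define d where "d = dist x z"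
      define D where "D = (u x - u z)\<^sup>2"
      have D0: "D \<ge> 0" unfolding D_def by simp
      show ?thesis
      proof (cases "d < r \<and> 0 < d")
        case True
        then have d0: "0 < d" and dr: "d < r" by auto
        have da: "0 < d powr a" using d0 by simp
        have "d powr a \<le> r powr a" by (rule powr_mono2) (use a0 d0 dr in auto)
        then have 1: "1 \<le> (r powr a / c) * (c / d powr a)" using c da by (simp add: field_simps)
        have "D \<le> (r powr a / c) * (c / d powr a) * D" using mult_right_mono[OF 1 D0] by simp
        moreover have e: "(r powr a / c) * (c / d powr a) * D = (r powr a / c) * (D * (c / d powr a))" by (simp only: mult_ac)
        ultimately have "ennreal D \<le> ennreal ((r powr a / c) * (D * (c / d powr a)))" by (intro ennreal_leI) linarith
        also have "\<dots> = ennreal (r powr a / c) * (ennreal D * ennreal (c / d powr a))"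
        proof -
          have q0: "0 \<le> r powr a / c" using c by simp
          show ?thesis by (simp only: ennreal_mult'[OF q0] ennreal_mult'[OF D0])
        qed
        also have "\<dots> \<le> ennreal (r powr a / c) * (ennreal D * K x z)"
        proof (intro mult_left_mono order_refl zero_le)
          have "x \<noteq> z" using d0 unfolding d_def by auto
          moreover have "ereal d < \<rho>" 
          proof -
            have "ereal d < ereal r" using dr by simp
            then show ?thesis using r(2) by (rule less_le_trans)
          qed
          ultimately show "ennreal (c / d powr a) \<le> K x z" using Kb[rule_format, of x z] unfolding d_def by simp
        qed
        finally show ?thesis unfolding Jf_def G_def p D_def d_def using True unfolding d_def by simp
      next
        case False
        then have "Jf p = 0" unfolding Jf_def p d_def by auto
        then show ?thesis by simp
      qed
    qed
    have uxm: "(\<lambda>x. ennreal ((u x)\<^sup>2)) \<in> borel_measurable lborel" by measurable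
    have tlm': "(\<lambda>w. ennreal (tlf w)) \<in> borel_measurable lborel" by measurable
    have X1: "integral\<^sup>N (lborel \<Otimes>\<^sub>M lborel) A1 = T0 * I"
    proof -
      have "integral\<^sup>N (lborel \<Otimes>\<^sub>M lborel) A1 = (\<integral>\<^sup>+x. \<integral>\<^sup>+z. A1 (x, z) \<partial>lborel \<partial>lborel)"
        by (rule lborel.nn_integral_fst[OF A1m, symmetric])
      also have "\<dots> = (\<integral>\<^sup>+x. ennreal ((u x)\<^sup>2) * T0 \<partial>lborel)"
      proof (rule nn_integral_cong)
        fix x :: 'a
        have mz: "(\<lambda>z. ennreal (tlf (x - z))) \<in> borel_measurable lborel" by measurable
        have "(\<integral>\<^sup>+z. A1 (x, z) \<partial>lborel) = ennreal ((u x)\<^sup>2) * (\<integral>\<^sup>+z. ennreal (tlf (x - z)) \<partial>lborel)"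
          unfolding A1_def fst_conv snd_conv by (rule nn_integral_cmult[OF mz])
        also have "(\<integral>\<^sup>+z. ennreal (tlf (x - z)) \<partial>lborel) = (\<integral>\<^sup>+z. ennreal (tlf (-x + z)) \<partial>lborel)"
        proof -
          have nz: "norm (-x + z) = norm (x - z)" for z using norm_minus_cancel[of "x - z"] by simp
          have "tlf (x - z) = tlf (-x + z)" for z unfolding tlf_def nz ..
          then show ?thesis by simp
        qed
        also have "\<dots> = T0" unfolding T0_def by (rule nn_integral_translate[OF tlm'])
        finally show "(\<integral>\<^sup>+z. A1 (x, z) \<partial>lborel) = ennreal ((u x)\<^sup>2) * T0" .
      qed
      also have "\<dots> = I * T0" unfolding I_def by (rule nn_integral_multc[OF uxm])
      finally show ?thesis by (simp add: mult.commute)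
    qed
    have X2: "integral\<^sup>N (lborel \<Otimes>\<^sub>M lborel) A2 = T0 * I"
    proof -
      have "integral\<^sup>N (lborel \<Otimes>\<^sub>M lborel) A2 = (\<integral>\<^sup>+z. \<integral>\<^sup>+x. A2 (x, z) \<partial>lborel \<partial>lborel)"
        by (rule lborel_pair.nn_integral_snd[OF A2m, symmetric])
      also have "\<dots> = (\<integral>\<^sup>+z. ennreal ((u z)\<^sup>2) * T0 \<partial>lborel)"
      proof (rule nn_integral_cong)
        fix z :: 'a
        have mx: "(\<lambda>x. ennreal (tlf (x - z))) \<in> borel_measurable lborel" by measurable
        have "(\<integral>\<^sup>+x. A2 (x, z) \<partial>lborel) = ennreal ((u z)\<^sup>2) * (\<integral>\<^sup>+x. ennreal (tlf (x - z)) \<partial>lborel)"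
          unfolding A2_def fst_conv snd_conv by (rule nn_integral_cmult[OF mx])
        also have "(\<integral>\<^sup>+x. ennreal (tlf (x - z)) \<partial>lborel) = (\<integral>\<^sup>+x. ennreal (tlf (-z + x)) \<partial>lborel)"
          by simp
        also have "\<dots> = T0" unfolding T0_def by (rule nn_integral_translate[OF tlm'])
        finally show "(\<integral>\<^sup>+x. A2 (x, z) \<partial>lborel) = ennreal ((u z)\<^sup>2) * T0" .
      qed
      also have "\<dots> = I * T0" unfolding I_def by (rule nn_integral_multc[OF uxm])
      finally show ?thesis by (simp add: mult.commute)
    qed
    have II: "I \<le> ennreal P * (ennreal (r powr a / c) * integral\<^sup>N (lborel \<Otimes>\<^sub>M lborel) G)"
    proof -
      have "I \<le> ennreal P * integral\<^sup>N (lborel \<Otimes>\<^sub>M lborel) Jf"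
        using PI[OF um uR] unfolding I_def Jf_def .
      also have "integral\<^sup>N (lborel \<Otimes>\<^sub>M lborel) Jf \<le> integral\<^sup>N (lborel \<Otimes>\<^sub>M lborel) (\<lambda>p. ennreal (r powr a / c) * G p)"
        by (intro nn_integral_mono PW2)
      also have "\<dots> = ennreal (r powr a / c) * integral\<^sup>N (lborel \<Otimes>\<^sub>M lborel) G"
        by (rule nn_integral_cmult[OF Gm])
      finally show ?thesis by (simp add: mult_left_mono)
    qed
    have "integral\<^sup>N (lborel \<Otimes>\<^sub>M lborel) F \<le> integral\<^sup>N (lborel \<Otimes>\<^sub>M lborel) (\<lambda>p. ennreal (1 / c) * G p + ennreal 2 * A1 p + ennreal 2 * A2 p)"
      by (intro nn_integral_mono PW1)
    also have "\<dots> = ennreal (1 / c) * integral\<^sup>N (lborel \<Otimes>\<^sub>M lborel) G + ennreal 2 * integral\<^sup>N (lborel \<Otimes>\<^sub>M lborel) A1 + ennreal 2 * integral\<^sup>N (lborel \<Otimes>\<^sub>M lborel) A2"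
      using Gm A1m A2m by (simp add: nn_integral_add nn_integral_cmult)
    also have "\<dots> = ennreal (1 / c) * integral\<^sup>N (lborel \<Otimes>\<^sub>M lborel) G + ennreal 4 * (T0 * I)"
      unfolding X1 X2 by (simp add: distrib_right[symmetric] ennreal_plus[symmetric] del: ennreal_plus)
    also have "\<dots> \<le> ennreal (1 / c) * integral\<^sup>N (lborel \<Otimes>\<^sub>M lborel) G + ennreal 4 * (T0 * (ennreal P * (ennreal (r powr a / c) * integral\<^sup>N (lborel \<Otimes>\<^sub>M lborel) G)))"
      by (intro add_mono mult_left_mono II order_refl) simp_all
    also have "\<dots> = ennreal C * integral\<^sup>N (lborel \<Otimes>\<^sub>M lborel) G"
    proof -
      have "ennreal C = ennreal (1 / c) + ennreal 4 * (ennreal T * (ennreal P * ennreal (r powr a / c)))"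
      proof -
        have e: "C = 1/c + 4 * (T * (P * (r powr a / c)))" unfolding C_def by (simp add: mult_ac)
        have p: "0 \<le> 4 * (T * (P * (r powr a / c)))" using c T P by simp
        have c': "0 \<le> 1 / c" using c by simp
        have f4: "(0::real) \<le> 4" by simp
        show ?thesis unfolding e ennreal_plus[OF c' p] ennreal_mult'[OF f4] ennreal_mult'[OF T(1)] ennreal_mult'[OF P] ..
      qed
      then show ?thesis unfolding T(2) by (simp add: distrib_left distrib_right mult_ac)
    qed
    finally show "integral\<^sup>N (lborel \<Otimes>\<^sub>M lborel) F \<le> ennreal C * integral\<^sup>N (lborel \<Otimes>\<^sub>M lborel) G" .
  qed
qed

end
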